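(* Let $\mathrm r\in\mathbb{Z}_+^d$ with $\mathrm r>0$, and let $x\in S_d$ have length $\mathrm n\in\mathbb{N}^d$; set $k_i=-\min_{0\le n\le n_i}x^{i,i}_n$ for $i\in[d]$ and $\mathrm k=(k_1,\dots,k_d)$. If $\mathrm n$ is the smallest solution of the system $(\mathrm r,x)$, then $\mathrm k$ is the smallest solution of the system $(\mathrm r,\bar x)$. Conversely, if $n_i=\tau^{(i)}_{k_i}$ for all $i\in[d]$ and $\mathrm k$ is the smallest solution of $(\mathrm r,\bar x)$, then $\mathrm n$ is the smallest solution of $(\mathrm r,x)$.
   Context: $d\ge2$, $[d]=\{1,\dots,d\}$, $\mathbb N=\{1,2,\dots\}$. $S_d$: families $x=(x^{(1)},\dots,x^{(d)})$, $x^{(i)}=(x^{i,1},\dots,x^{i,d})$ a $\mathbb{Z}^d$-valued sequence indexed by $\{0,\dots,n_i\}$ ($0\le n_i\le\infty$), with $x^{(i)}_0=0$, $x^{i,j}$ nondecreasing for $i\ne j$, and $x^{i,i}_{n+1}-x^{i,i}_n\ge -1$; $(n_1,\dots,n_d)$ is its length; $x^{i,j}(n):=x^{i,j}_n$. Order on vectors is coordinatewise; $\mathrm q<\mathrm q'$ means $\mathrm q\le\mathrm q'$, $\mathrm q\ne\mathrm q'$. For $x$ of length $\mathrm q$, a solution of the system $(\mathrm r,x)$ is $\mathrm s\in\mathbb{Z}_+^d$ with $\mathrm s\le\mathrm q$ and $r_j+\sum_{i=1}^dx^{i,j}(s_i)=0$ for all $j\in[d]$; the smallest solution is a solution that is $\le$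 every solution. For $x\in S_d$, with $k_i=-\inf_{0\le n\le n_i}x^{i,i}_n$, define $\tau^{(i)}_k=\min\{n\ge 0:x^{i,i}_n=-k\}$ for $0\le k\le k_i$, and $\bar x^{i,j}_k=x^{i,j}(\tau^{(i)}_k)$ for $0\le k\le k_i$, $i,j\in[d]$; $\bar x=(\bar x^{(1)},\dots,\bar x^{(d)})\in S_d$ has length $(k_1,\dots,k_d)$. *)

theory Defs
  imports Main
begin

text \<open>A family x = (x^(1),...,x^(d)) is encoded as x :: nat => nat => nat => int,
  with x i j m = x^{i,j}_m for i,j in {1..d}; its length is q :: nat => nat
  (q i = n_i, finite). Values outside the index ranges are irrelevant.\<close>

definition in_S :: "nat \<Rightarrow> (nat \<Rightarrow> nat \<Rightarrow> nat \<Rightarrow> int) \<Rightarrow> (nat \<Rightarrow> nat) \<Rightarrow> bool" where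
  "in_S d x q \<longleftrightarrow>
     (\<forall>i\<in>{1..d}.
        (\<forall>j\<in>{1..d}. x i j 0 = 0) \<and>
        (\<forall>j\<in>{1..d}. j \<noteq> i \<longrightarrow> (\<forall>m<q i. x i j m \<le> x i j (Suc m))) \<and>
        (\<forall>m<q i. x i i (Suc m) - x i i m \<ge> -1))"

definition is_solution :: "nat \<Rightarrow> (nat \<Rightarrow> nat) \<Rightarrow> (nat \<Rightarrow> nat \<Rightarrow> nat \<Rightarrow> int)
    \<Rightarrow> (nat \<Rightarrow> nat) \<Rightarrow> (nat \<Rightarrow> nat) \<Rightarrow> bool" where
  "is_solution d r x q s \<longleftrightarrow>
     (\<forall>i\<in>{1..d}. s i \<le> q i) \<and>
     (\<forall>j\<in>{1..d}. int (r j) + (\<Sum>i=1..d. x i j (s i)) = 0)"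

definition smallest_solution :: "nat \<Rightarrow> (nat \<Rightarrow> nat) \<Rightarrow> (nat \<Rightarrow> nat \<Rightarrow> nat \<Rightarrow> int)
    \<Rightarrow> (nat \<Rightarrow> nat) \<Rightarrow> (nat \<Rightarrow> nat) \<Rightarrow> bool" where
  "smallest_solution d r x q s \<longleftrightarrow>
     is_solution d r x q s \<and>
     (\<forall>s'. is_solution d r x q s' \<longrightarrow> (\<forall>i\<in>{1..d}. s i \<le> s' i))"

definition kvec :: "(nat \<Rightarrow> nat \<Rightarrow> nat \<Rightarrow> int) \<Rightarrow> (nat \<Rightarrow> nat) \<Rightarrow> nat \<Rightarrow> nat" where
  "kvec x q i = nat (- Min {x i i m | m. m \<le> q i})"

definition tau :: "(nat \<Rightarrow> nat \<Rightarrow> nat \<Rightarrow> int) \<Rightarrow> nat \<Rightarrow> nat \<Rightarrow> nat" where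
  "tau x i k = (LEAST m. x i i m = - int k)"

definition xbar :: "(nat \<Rightarrow> nat \<Rightarrow> nat \<Rightarrow> int) \<Rightarrow> nat \<Rightarrow> nat \<Rightarrow> nat \<Rightarrow> int" where
  "xbar x i j k = x i j (tau x i k)"

end

theory Submission
  imports Defs
begin

lemma off_mono:
  assumes "in_S d x n" "i\<in>{1..d}" "j\<in>{1..d}" "j\<noteq>i" "a \<le> b" "b \<le> n i"
  shows "x i j a \<le> x i j b"
proof -
  from assms(1-4) have step: "\<forall>m<n i. x i j m \<le> x i j (Suc m)" by (auto simp: in_S_def)
  show ?thesis using assms(5,6)
  proof (induction b)
    case 0 then show ?case by simp
  next
    case (Suc b)
    show ?case
    proof (cases "a = Suc b")
      case True then show ?thesis by simp
    next
      case False
      then have "a \<le> b" using Suc.prems by simp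
      then have "x i j a \<le> x i j b" using Suc by simp
      moreover have "x i j b \<le> x i j (Suc b)" using step Suc.prems by simp
      ultimately show ?thesis by simp
    qed
  qed
qed

lemma ivt:
  assumes "in_S d x n" "i\<in>{1..d}" "m \<le> n i" "x i i m \<le> - int a"
  shows "\<exists>m'\<le>m. x i i m' = - int a"
  using assms(3,4)
proof (induction m)
  case 0
  have "x i i 0 = 0" using assms(1,2) by (auto simp: in_S_def)
  then show ?case using 0 by auto
next
  case (Suc m)
  show ?case
  proof (cases "x i i m \<le> - int a")
    case True
    then obtain m' where "m' \<le> m" "x i i m' = - int a" using Suc by auto
    then show ?thesis by (intro exI[of _ m']) auto
  next
    case False
    have "x i i (Suc m) - x i i m \<ge> -1" using assms(1,2) Suc.prems by (auto simp: in_S_def)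
    then have "x i i (Suc m) = - int a" using False Suc.prems by linarith
    then show ?thesis by auto
  qed
qed

lemma tau_le:
  assumes "in_S d x n" "i\<in>{1..d}" "m \<le> n i" "x i i m \<le> - int a"
  shows "tau x i a \<le> m \<and> x i i (tau x i a) = - int a"
proof -
  obtain m' where m': "m' \<le> m" "x i i m' = - int a" using ivt[OF assms] by auto
  have "tau x i a \<le> m'" unfolding tau_def by (rule Least_le) (rule m'(2))
  moreover have "x i i (tau x i a) = - int a" unfolding tau_def by (rule LeastI) (rule m'(2))
  ultimately show ?thesis using m' by auto
qed

definition lev :: "nat \<Rightarrow> (nat \<Rightarrow> nat) \<Rightarrow> (nat \<Rightarrow> nat \<Rightarrow> nat \<Rightarrow> int) \<Rightarrow> (nat \<Rightarrow> nat) \<Rightarrow> nat \<Rightarrow> int" where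
  "lev d r x s i = int (r i) + (\<Sum>l\<in>{1..d}-{i}. x l i (s l))"

lemma eq_lev:
  assumes "i \<in> {1..d}"
  shows "(int (r i) + (\<Sum>l=1..d. x l i (s l)) = 0) \<longleftrightarrow> x i i (s i) = - lev d r x s i"
proof -
  have "(\<Sum>l=1..d. x l i (s l)) = x i i (s i) + (\<Sum>l\<in>{1..d}-{i}. x l i (s l))"
    using assms by (simp add: sum.remove)
  then show ?thesis unfolding lev_def by linarith
qed

lemma lev_mono:
  assumes "in_S d x n" "i\<in>{1..d}" "\<forall>l\<in>{1..d}. s l \<le> s' l" "\<forall>l\<in>{1..d}. s' l \<le> n l"
  shows "lev d r x s i \<le> lev d r x s' i"
proof -
  have "(\<Sum>l\<in>{1..d}-{i}. x l i (s l)) \<le> (\<Sum>l\<in>{1..d}-{i}. x l i (s' l))"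
    by (rule sum_mono) (use assms off_mono in auto)
  then show ?thesis unfolding lev_def by simp
qed

lemma lev_nonneg:
  assumes "in_S d x n" "i\<in>{1..d}" "\<forall>l\<in>{1..d}. s l \<le> n l"
  shows "lev d r x s i \<ge> 0"
proof -
  have "lev d r x (\<lambda>_. 0) i \<le> lev d r x s i"
    by (rule lev_mono[OF assms(1,2)]) (use assms in auto)
  moreover have "lev d r x (\<lambda>_. 0) i \<ge> 0"
    using assms(1,2) by (auto simp: lev_def in_S_def)
  ultimately show ?thesis by simp
qed

definition Phi where "Phi d r x s i = tau x i (nat (lev d r x s i))"

lemma fixpoint:
  assumes S: "in_S d x n" and sol: "is_solution d r x n s"
  shows "\<exists>t. (\<forall>i\<in>{1..d}. t i \<le> s i) \<and> is_solution d r x n t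
          \<and> (\<forall>i\<in>{1..d}. t i = tau x i (nat (lev d r x t i)) \<and> x i i (t i) = - lev d r x t i)"
proof -
  have sn: "\<forall>i\<in>{1..d}. s i \<le> n i" using sol by (auto simp: is_solution_def)
  have seq: "\<forall>i\<in>{1..d}. x i i (s i) = - lev d r x s i"
  proof
    fix i assume i: "i\<in>{1..d}"
    have "int (r i) + (\<Sum>l=1..d. x l i (s l)) = 0" using sol i by (simp add: is_solution_def)
    then show "x i i (s i) = - lev d r x s i" using eq_lev[OF i, of r x s] by blast
  qed
  define P where "P u \<longleftrightarrow> (\<forall>i\<in>{1..d}. u i \<le> s i) \<and> (\<forall>i\<in>{1..d}. Phi d r x u i \<le> u i)" for u
  have key: "Phi d r x u i \<le> m \<and> x i i (Phi d r x u i) = - lev d r x u i"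
    if "i\<in>{1..d}" "\<forall>l\<in>{1..d}. u l \<le> s l" "m \<le> n i" "x i i m \<le> - lev d r x u i" for u i m
  proof -
    have un: "\<forall>l\<in>{1..d}. u l \<le> n l" using that(2) sn le_trans by blast
    have "lev d r x u i \<ge> 0" using lev_nonneg[OF S that(1) un] .
    then have "x i i m \<le> - int (nat (lev d r x u i))" using that(4) by simp
    then show ?thesis using tau_le[OF S that(1,3), of "nat (lev d r x u i)"]
      \<open>lev d r x u i \<ge> 0\<close> unfolding Phi_def by simp
  qed
  have Ps: "P s" unfolding P_def
  proof (intro conjI ballI)
    fix i assume i: "i\<in>{1..d}"
    show "Phi d r x s i \<le> s i" using key[OF i, of s "s i"] seq sn i by simp
  qed simp
  obtain u where Pu: "P u" and umin: "\<And>v. P v \<Longrightarrow> (\<Sum>i=1..d. u i) \<le> (\<Sum>i=1..d. v i)"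
    using ex_has_least_nat[of P s "\<lambda>v. \<Sum>i=1..d. v i"] Ps by blast
  have us: "\<forall>i\<in>{1..d}. u i \<le> s i" and Pu2: "\<forall>i\<in>{1..d}. Phi d r x u i \<le> u i"
    using Pu by (auto simp: P_def)
  have un: "\<forall>i\<in>{1..d}. u i \<le> n i" using us sn by force
  have hit: "\<forall>i\<in>{1..d}. x i i (Phi d r x u i) = - lev d r x u i"
  proof
    fix i assume i: "i\<in>{1..d}"
    have "lev d r x u i \<le> lev d r x s i" using lev_mono[OF S i] us sn by auto
    then show "x i i (Phi d r x u i) = - lev d r x u i"
      using key[OF i us, of "s i"] seq sn i by auto
  qed
  have PP: "P (Phi d r x u)" unfolding P_def
  proof (intro conjI ballI)
    fix i assume i: "i\<in>{1..d}"
    show "Phi d r x u i \<le> s i" using Pu2 us i le_trans by blast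
    have pu: "\<forall>l\<in>{1..d}. Phi d r x u l \<le> s l" using Pu2 us le_trans by blast
    have pn: "\<forall>l\<in>{1..d}. Phi d r x u l \<le> n l" using Pu2 un le_trans by blast
    have "lev d r x (Phi d r x u) i \<le> lev d r x u i"
      by (rule lev_mono[OF S i]) (use Pu2 un in auto)
    then have "x i i (Phi d r x u i) \<le> - lev d r x (Phi d r x u) i"
      using hit i by simp
    then show "Phi d r x (Phi d r x u) i \<le> Phi d r x u i"
      using key[OF i pu, of "Phi d r x u i"] pn i by blast
  qed
  have eqs: "\<forall>i\<in>{1..d}. Phi d r x u i = u i"
  proof (rule ccontr)
    assume "\<not> ?thesis"
    then obtain a where "a\<in>{1..d}" "Phi d r x u a < u a" using Pu2 by force
    then have "(\<Sum>i=1..d. Phi d r x u i) < (\<Sum>i=1..d. u i)"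
      using Pu2 by (intro sum_strict_mono_ex1) auto
    with umin[OF PP] show False by simp
  qed
  have ueq: "\<forall>i\<in>{1..d}. x i i (u i) = - lev d r x u i"
  proof
    fix i assume i: "i\<in>{1..d}"
    have "x i i (Phi d r x u i) = - lev d r x u i" using hit i by blast
    then show "x i i (u i) = - lev d r x u i" using eqs i by simp
  qed
  show ?thesis
  proof (intro exI conjI ballI)
    show "\<And>i. i\<in>{1..d} \<Longrightarrow> u i \<le> s i" using us by auto
    show "is_solution d r x n u" unfolding is_solution_def
    proof (intro conjI ballI)
      fix j assume j: "j\<in>{1..d}"
      show "int (r j) + (\<Sum>i=1..d. x i j (u i)) = 0"
        using eq_lev[OF j, of r x u] ueq j by blast
    qed (use un in blast)
    fix i assume i: "i\<in>{1..d}"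
    show "u i = tau x i (nat (lev d r x u i))"
      using eqs i unfolding Phi_def by simp
    show "x i i (u i) = - lev d r x u i" using ueq i by blast
  qed
qed

lemma fin_set: "finite {x i i m | m. m \<le> (N::nat)}"
proof -
  have "{x i i m | m. m \<le> N} = (\<lambda>m. x i i m) ` {..N}" by auto
  then show ?thesis by simp
qed

lemma min_le: "m \<le> N \<Longrightarrow> Min {x i i m | m. m \<le> (N::nat)} \<le> x i i m"
  by (rule Min_le[OF fin_set]) auto

lemma kvec_ge:
  assumes "m \<le> n i" "x i i m = - L" "L \<ge> 0"
  shows "kvec x n i \<ge> nat L"
  using min_le[OF assms(1), of x i] assms unfolding kvec_def by simp

lemma kvec_eq:
  assumes S: "in_S d x n" and i: "i\<in>{1..d}" and L: "L \<ge> 0"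
    and t: "n i = tau x i (nat L)" and h: "x i i (n i) = - L"
  shows "kvec x n i = nat L"
proof -
  have "Min {x i i m | m. m \<le> n i} = - L"
  proof (rule Min_eqI[OF fin_set])
    show "- L \<in> {x i i m | m. m \<le> n i}" using h[symmetric] by blast
    fix y assume "y \<in> {x i i m | m. m \<le> n i}"
    then obtain m where m: "m \<le> n i" "y = x i i m" by auto
    show "- L \<le> y"
    proof (rule ccontr)
      assume "\<not> - L \<le> y"
      then have "x i i m \<le> - int (nat L)" using m L by simp
      then have "tau x i (nat L) \<le> m" using tau_le[OF S i m(1)] by blast
      then have "m = n i" using t m by simp
      then show False using h m \<open>\<not> - L \<le> y\<close> by simp
    qed
  qed
  then show ?thesis unfolding kvec_def by simp
qed

theorem lemma2p6:
  fixes d :: nat and r :: "nat \<Rightarrow> nat" and x :: "nat \<Rightarrow> nat \<Rightarrow> nat \<Rightarrow> int"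
    and n :: "nat \<Rightarrow> nat"
  assumes "d \<ge> 2"
    and "\<exists>j\<in>{1..d}. r j > 0"
    and "in_S d x n"
    and "\<forall>i\<in>{1..d}. n i \<ge> 1"
  shows "(smallest_solution d r x n n \<longrightarrow>
            smallest_solution d r (xbar x) (kvec x n) (kvec x n))
       \<and> ((\<forall>i\<in>{1..d}. n i = tau x i (kvec x n i))
            \<and> smallest_solution d r (xbar x) (kvec x n) (kvec x n)
            \<longrightarrow> smallest_solution d r x n n)"
proof (intro conjI impI)
  note S = assms(3)
  assume sm: "smallest_solution d r x n n"
  then have soln: "is_solution d r x n n" and mn: "\<And>s'. is_solution d r x n s' \<Longrightarrow> \<forall>i\<in>{1..d}. n i \<le> s' i"
    by (auto simp: smallest_solution_def)
  obtain t where t1: "\<forall>i\<in>{1..d}. t i \<le> n i" and t2: "is_solution d r x n t"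
    and t3: "\<forall>i\<in>{1..d}. t i = tau x i (nat (lev d r x t i)) \<and> x i i (t i) = - lev d r x t i"
    using fixpoint[OF S soln] by blast
  have tn: "\<forall>i\<in>{1..d}. t i = n i" using t1 mn[OF t2] by force
  have levt: "\<forall>i\<in>{1..d}. lev d r x t i = lev d r x n i"
    using tn unfolding lev_def by (intro ballI arg_cong[where f="\<lambda>z. int (r _) + z"] sum.cong) auto
  have nfix: "\<forall>i\<in>{1..d}. n i = tau x i (nat (lev d r x n i)) \<and> x i i (n i) = - lev d r x n i"
    using t3 tn levt by metis
  have nn: "\<forall>i\<in>{1..d}. lev d r x n i \<ge> 0"
    using lev_nonneg[OF S] by auto
  have kv: "\<forall>i\<in>{1..d}. kvec x n i = nat (lev d r x n i)"
    using kvec_eq[OF S] nfix nn by blast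
  have ntau: "\<forall>i\<in>{1..d}. n i = tau x i (kvec x n i)" using nfix kv by metis
  have kval: "\<forall>i\<in>{1..d}. x i i (n i) = - int (kvec x n i)"
  proof
    fix i assume i: "i\<in>{1..d}"
    have "x i i (n i) = - lev d r x n i" using nfix i by blast
    moreover have "int (kvec x n i) = lev d r x n i" using kv nn i by simp
    ultimately show "x i i (n i) = - int (kvec x n i)" by simp
  qed
  have xb: "\<forall>i\<in>{1..d}. \<forall>j. xbar x i j (kvec x n i) = x i j (n i)"
    using ntau unfolding xbar_def by metis
  have solk: "is_solution d r (xbar x) (kvec x n) (kvec x n)"
    unfolding is_solution_def
  proof (intro conjI ballI)
    fix j assume j: "j\<in>{1..d}"
    have "(\<Sum>i=1..d. xbar x i j (kvec x n i)) = (\<Sum>i=1..d. x i j (n i))"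
      using xb by (intro sum.cong) auto
    then show "int (r j) + (\<Sum>i=1..d. xbar x i j (kvec x n i)) = 0"
      using soln j by (simp add: is_solution_def)
  qed simp
  show "smallest_solution d r (xbar x) (kvec x n) (kvec x n)"
    unfolding smallest_solution_def
  proof (intro conjI allI impI ballI)
    show "is_solution d r (xbar x) (kvec x n) (kvec x n)" by (rule solk)
    fix s' i assume s': "is_solution d r (xbar x) (kvec x n) s'" and i: "i\<in>{1..d}"
    have s'k: "\<forall>i\<in>{1..d}. s' i \<le> kvec x n i" using s' by (simp add: is_solution_def)
    have tl: "\<forall>i\<in>{1..d}. tau x i (s' i) \<le> n i \<and> x i i (tau x i (s' i)) = - int (s' i)"
    proof
      fix i assume i: "i\<in>{1..d}"
      show "tau x i (s' i) \<le> n i \<and> x i i (tau x i (s' i)) = - int (s' i)"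
        using tau_le[OF S i le_refl, of "s' i"] kval s'k i by simp
    qed
    have "is_solution d r x n (\<lambda>i. tau x i (s' i))"
      unfolding is_solution_def
    proof (intro conjI ballI)
      fix j assume j: "j\<in>{1..d}"
      show "int (r j) + (\<Sum>i=1..d. x i j (tau x i (s' i))) = 0"
        using s' j by (simp add: is_solution_def xbar_def)
    qed (use tl in auto)
    then have le: "n i \<le> tau x i (s' i)" using mn i by blast
    show "kvec x n i \<le> s' i"
    proof (rule ccontr)
      assume "\<not> kvec x n i \<le> s' i"
      then have "tau x i (s' i) < n i" using tl i le kval by force
      then show False using le by simp
    qed
  qed
next
  note S = assms(3)
  assume h: "(\<forall>i\<in>{1..d}. n i = tau x i (kvec x n i))
            \<and> smallest_solution d r (xbar x) (kvec x n) (kvec x n)"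
  then have ntau: "\<forall>i\<in>{1..d}. n i = tau x i (kvec x n i)"
    and solk: "is_solution d r (xbar x) (kvec x n) (kvec x n)"
    and mk: "\<And>s'. is_solution d r (xbar x) (kvec x n) s' \<Longrightarrow> \<forall>i\<in>{1..d}. kvec x n i \<le> s' i"
    by (auto simp: smallest_solution_def)
  show "smallest_solution d r x n n"
    unfolding smallest_solution_def
  proof (intro conjI allI impI ballI)
    show "is_solution d r x n n" unfolding is_solution_def
    proof (intro conjI ballI)
      fix j assume j: "j\<in>{1..d}"
      have "(\<Sum>i=1..d. xbar x i j (kvec x n i)) = (\<Sum>i=1..d. x i j (n i))"
        using ntau unfolding xbar_def by (intro sum.cong) auto
      moreover have "int (r j) + (\<Sum>i=1..d. xbar x i j (kvec x n i)) = 0"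
        using solk j unfolding is_solution_def by blast
      ultimately show "int (r j) + (\<Sum>i=1..d. x i j (n i)) = 0" by simp
    qed simp
    fix s i assume s: "is_solution d r x n s" and i: "i\<in>{1..d}"
    have sn: "\<forall>i\<in>{1..d}. s i \<le> n i" using s by (simp add: is_solution_def)
    obtain t where t1: "\<forall>i\<in>{1..d}. t i \<le> s i" and t2: "is_solution d r x n t"
      and t3: "\<forall>i\<in>{1..d}. t i = tau x i (nat (lev d r x t i)) \<and> x i i (t i) = - lev d r x t i"
      using fixpoint[OF S s] by blast
    have tn: "\<forall>i\<in>{1..d}. t i \<le> n i" using t1 sn by force
    have nn: "\<forall>i\<in>{1..d}. lev d r x t i \<ge> 0" using lev_nonneg[OF S] tn by auto
    define sg where "sg i = nat (lev d r x t i)" for i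
    have sgk: "\<forall>i\<in>{1..d}. sg i \<le> kvec x n i"
      using kvec_ge t3 tn nn unfolding sg_def by metis
    have "is_solution d r (xbar x) (kvec x n) sg" unfolding is_solution_def
    proof (intro conjI ballI)
      fix j assume j: "j\<in>{1..d}"
      have "(\<Sum>i=1..d. xbar x i j (sg i)) = (\<Sum>i=1..d. x i j (t i))"
        using t3 unfolding xbar_def sg_def by (intro sum.cong) auto
      then show "int (r j) + (\<Sum>i=1..d. xbar x i j (sg i)) = 0"
        using t2 j by (simp add: is_solution_def)
    qed (use sgk in auto)
    then have ks: "kvec x n i \<le> sg i" using mk i by blast
    have "x i i (t i) \<le> - int (kvec x n i)" using ks t3 nn i unfolding sg_def by force
    then have "tau x i (kvec x n i) \<le> t i" using tau_le[OF S i] tn i by blast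
    then show "n i \<le> s i" using ntau t1 i by force
  qed
qed

end
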